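(* Let $\epsilon>0$. For every $\widehat\phi\in\mathcal{M}_\epsilon$ there exists a unique $\widehat\psi\in\mathcal{M}$ satisfying $$\frac{\widehat\psi_{i+1,j}-\widehat\psi_{i,j}}{\Delta t}-\frac{\sigma^2}{2}\frac{\widehat\psi_{i+1,j+1}-2\widehat\psi_{i+1,j}+\widehat\psi_{i+1,j-1}}{(\Delta x)^2}=\frac{1}{\sigma^2}f(x_j,\widehat\phi_{i+1,j}\widehat\psi_{i+1,j})\widehat\psi_{i+1,j},\quad 0\le i\le I-1,\ 0\le j\le J,$$ with $\widehat\psi_{0,j}=\frac{m_0(x_j)}{\widehat\phi_{0,j}}$ for all $j$ and the conventions $\widehat\psi_{i,-1}=\widehat\psi_{i,0}$, $\widehat\psi_{i,J+1}=\widehat\psi_{i,J}$. Hence $\widehat\Psi:\widehat\phi\in\mathcal{M}_\epsilon\mapsto\widehat\psi\in\mathcal{M}$ is well defined, and moreover $\widehat\Psi(\widehat\phi)\in\mathcal{M}_0$ for every $\widehat\phi\in\mathcal{M}_\epsilon$.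
   Context: Discrete setting: $\Omega=(0,1)$, $T>0$, $\sigma>0$; $m_0:[0,1]\to\mathbb{R}$ bounded with $m_0\ge0$. $f:[0,1]\times\mathbb{R}\to\mathbb{R}$ is continuous and nonincreasing in its second variable, bounded, and $f\le0$. For positive integers $I,J$: $\Delta t=T/I$, $\Delta x=1/J$, $x_j=j\Delta x$. $\mathcal{M}$ is the set of real matrices $(m_{i,j})_{0\le i\le I,0\le j\le J}$ and $\mathcal{M}_\epsilon=\{m\in\mathcal{M}: m_{i,j}\ge\epsilon\ \forall i,j\}$. *)

theory Defs
  imports "HOL-Analysis.Analysis"
begin

text \<open>Matrices (m_{i,j}), 0 \<le> i \<le> I, 0 \<le> j \<le> J, are represented as functions
  nat \<Rightarrow> nat \<Rightarrow> real; only the values on the grid matter.\<close>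

definition in_M_eps :: "nat \<Rightarrow> nat \<Rightarrow> real \<Rightarrow> (nat \<Rightarrow> nat \<Rightarrow> real) \<Rightarrow> bool" where
  "in_M_eps I J \<epsilon> m \<longleftrightarrow> (\<forall>i\<le>I. \<forall>j\<le>J. m i j \<ge> \<epsilon>)"

definition left_nb :: "(nat \<Rightarrow> nat \<Rightarrow> real) \<Rightarrow> nat \<Rightarrow> nat \<Rightarrow> real" where
  "left_nb m i j = (if j = 0 then m i 0 else m i (j - 1))"

definition right_nb :: "nat \<Rightarrow> (nat \<Rightarrow> nat \<Rightarrow> real) \<Rightarrow> nat \<Rightarrow> nat \<Rightarrow> real" where
  "right_nb J m i j = (if j = J then m i J else m i (j + 1))"

definition psi_scheme ::
  "real \<Rightarrow> real \<Rightarrow> nat \<Rightarrow> nat \<Rightarrow> (real \<Rightarrow> real \<Rightarrow> real) \<Rightarrow> (real \<Rightarrow> real)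
   \<Rightarrow> (nat \<Rightarrow> nat \<Rightarrow> real) \<Rightarrow> (nat \<Rightarrow> nat \<Rightarrow> real) \<Rightarrow> bool" where
  "psi_scheme T \<sigma> I J f m0 \<phi> \<psi> \<longleftrightarrow>
     (let dt = T / real I; dx = 1 / real J; x = (\<lambda>j::nat. real j * dx) in
       (\<forall>i<I. \<forall>j\<le>J.
          (\<psi> (i+1) j - \<psi> i j) / dt
          - \<sigma>^2 / 2 * (right_nb J \<psi> (i+1) j - 2 * \<psi> (i+1) j + left_nb \<psi> (i+1) j) / dx^2
          = 1 / \<sigma>^2 * f (x j) (\<phi> (i+1) j * \<psi> (i+1) j) * \<psi> (i+1) j)
       \<and> (\<forall>j\<le>J. \<psi> 0 j = m0 (x j) / \<phi> 0 j))"

end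

theory Submission imports Defs begin

definition R1 :: "nat \<Rightarrow> (nat\<Rightarrow>real) \<Rightarrow> nat \<Rightarrow> real" where
  "R1 J u j = (if j = J then u J else u (Suc j))"
definition L1 :: "(nat\<Rightarrow>real) \<Rightarrow> nat \<Rightarrow> real" where
  "L1 u j = (if j = 0 then u 0 else u (j - 1))"
definition AEq :: "nat \<Rightarrow> real \<Rightarrow> real \<Rightarrow> (nat \<Rightarrow> real \<Rightarrow> real) \<Rightarrow> (nat\<Rightarrow>real) \<Rightarrow> (nat\<Rightarrow>real) \<Rightarrow> bool" where
  "AEq J a c g p u \<longleftrightarrow> (\<forall>j\<le>J. a * u j - c * (R1 J u j - 2 * u j + L1 u j) + g j (u j) = p j)"

lemma R1_cases: assumes that: "j \<le> J" shows " \<exists>k\<le>J. \<forall>u. R1 J u j = u k"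
proof (cases "j = J")
  case True then show ?thesis unfolding R1_def by auto
next
  case False then show ?thesis using that unfolding R1_def by (auto intro!: exI[of _ "Suc j"])
qed

lemma L1_cases: "j \<le> J \<Longrightarrow> \<exists>k\<le>J. \<forall>u. L1 u j = u k"
  unfolding L1_def by (cases "j = 0") (auto intro!: exI[of _ "j - 1"])

lemma ex_argmin: fixes u :: "nat \<Rightarrow> real" shows "\<exists>k\<le>J. \<forall>j\<le>J. u k \<le> u j"
proof -
  have fin: "finite (u ` {..J})" and ne: "u ` {..J} \<noteq> {}" by auto
  have "Min (u ` {..J}) \<in> u ` {..J}" using Min_in[OF fin ne] .
  then obtain k where k: "k \<le> J" "u k = Min (u ` {..J})" by (metis atMost_iff imageE)
  have "\<forall>j\<le>J. Min (u ` {..J}) \<le> u j" using Min_le[OF fin] by auto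
  then show ?thesis using k by auto
qed

lemma AEq_nonneg:
  assumes a: "a > 0" and c: "c \<ge> 0" and p: "\<forall>j\<le>J. p j \<ge> 0"
    and gn: "\<forall>j\<le>J. \<forall>s\<le>0. g j s \<le> 0" and E: "AEq J a c g p u"
  shows "\<forall>j\<le>J. u j \<ge> 0"
proof (rule ccontr)
  assume "\<not> ?thesis"
  then obtain j where j: "j \<le> J" "u j < 0" by auto
  obtain k where k: "k\<le>J" "\<forall>j\<le>J. u k \<le> u j" using ex_argmin by blast
  have "u k \<le> u j" using k j by blast
  then have uk: "u k < 0" using j by linarith
  obtain k1 where k1: "k1 \<le> J" "\<forall>u. R1 J u k = u k1" using R1_cases[OF k(1)] by blast
  obtain k2 where k2: "k2 \<le> J" "\<forall>u. L1 u k = u k2" using L1_cases[OF k(1)] by blast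
  have "R1 J u k = u k1" "L1 u k = u k2" using k1 k2 by auto
  moreover have "u k \<le> u k1" "u k \<le> u k2" using k k1 k2 by auto
  ultimately have "R1 J u k - 2 * u k + L1 u k \<ge> 0" by linarith
  then have "c * (R1 J u k - 2 * u k + L1 u k) \<ge> 0" using c by simp
  moreover have "g k (u k) \<le> 0" using gn k uk by auto
  moreover have "a * u k < 0" using a uk by (simp add: mult_pos_neg)
  moreover have "a * u k - c * (R1 J u k - 2 * u k + L1 u k) + g k (u k) = p k" using E k unfolding AEq_def by blast
  moreover have "p k \<ge> 0" using p k by auto
  ultimately show False by linarith
qed

lemma AEq_le:
  assumes a: "a > 0" and c: "c \<ge> 0" and p: "\<forall>j\<le>J. p j \<ge> 0"
    and gn: "\<forall>j\<le>J. \<forall>s\<le>0. g j s \<le> 0"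
    and gm: "\<forall>j\<le>J. \<forall>s t. 0\<le>s \<longrightarrow> s\<le>t \<longrightarrow> g j s \<le> g j t"
    and Eu: "AEq J a c g p u" and Ev: "AEq J a c g p v"
  shows "\<forall>j\<le>J. u j \<le> v j"
proof (rule ccontr)
  assume "\<not> ?thesis"
  then obtain j where j: "j \<le> J" "u j > v j" by force
  have u0: "\<forall>j\<le>J. u j \<ge> 0" and v0: "\<forall>j\<le>J. v j \<ge> 0"
    using AEq_nonneg[OF a c p gn Eu] AEq_nonneg[OF a c p gn Ev] by auto
  obtain k where k: "k\<le>J" "\<forall>j\<le>J. v k - u k \<le> v j - u j" using ex_argmin[of J "\<lambda>j. v j - u j"] by blast
  have "v k - u k \<le> v j - u j" using k j by blast
  then have wk: "u k - v k > 0" using j by linarith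
  obtain k1 where k1: "k1 \<le> J" "\<forall>u. R1 J u k = u k1" using R1_cases[OF k(1)] by blast
  obtain k2 where k2: "k2 \<le> J" "\<forall>u. L1 u k = u k2" using L1_cases[OF k(1)] by blast
  have "R1 J u k = u k1" "L1 u k = u k2" "R1 J v k = v k1" "L1 v k = v k2" using k1 k2 by auto
  moreover have "v k - u k \<le> v k1 - u k1" "v k - u k \<le> v k2 - u k2" using k k1 k2 by auto
  ultimately have "(R1 J u k - 2 * u k + L1 u k) - (R1 J v k - 2 * v k + L1 v k) \<le> 0" by linarith
  then have "c * ((R1 J u k - 2 * u k + L1 u k) - (R1 J v k - 2 * v k + L1 v k)) \<le> 0"
    using c by (simp add: mult_nonneg_nonpos)
  then have 1: "c * (R1 J u k - 2 * u k + L1 u k) - c * (R1 J v k - 2 * v k + L1 v k) \<le> 0"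
    by (simp add: right_diff_distrib)
  have 2: "g k (v k) \<le> g k (u k)" using gm k v0 wk by auto
  have 3: "a * u k - a * v k > 0" using a wk by (simp add: right_diff_distrib[symmetric])
  have "a * u k - c * (R1 J u k - 2 * u k + L1 u k) + g k (u k) = p k"
       "a * v k - c * (R1 J v k - 2 * v k + L1 v k) + g k (v k) = p k"
    using Eu Ev k unfolding AEq_def by blast+
  with 1 2 3 show False by linarith
qed

lemma AEq_exists:
  assumes a: "a > 0" and c: "c \<ge> 0" and p: "\<forall>j\<le>J. p j \<ge> 0"
    and gc: "\<forall>j\<le>J. continuous_on UNIV (g j)"
    and gm: "\<forall>j\<le>J. \<forall>s t. 0\<le>s \<longrightarrow> s\<le>t \<longrightarrow> g j s \<le> g j t"
    and gp: "\<forall>j\<le>J. \<forall>s\<ge>0. g j s \<ge> 0"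
    and gn: "\<forall>j\<le>J. \<forall>s\<le>0. g j s \<le> 0"
  shows "\<exists>u. AEq J a c g p u"
proof -
  define b where "b = a + 2 * c"
  have b: "b > 0" using a c by (simp add: b_def)
  define G where "G j s = b * s + g j s" for j s
  have G_cont: "continuous_on UNIV (G j)" if "j\<le>J" for j
    using gc that unfolding G_def by (auto intro!: continuous_intros)
  have G0: "G j 0 = 0" if "j\<le>J" for j
    using gp gn that unfolding G_def by (metis add.left_neutral mult_zero_right order.antisym order_refl)
  have G_strict: "G j s < G j t" if "j\<le>J" "0 \<le> s" "s < t" for j s t
  proof -
    have "b * s < b * t" using b that by simp
    moreover have "g j s \<le> g j t" using gm that by auto
    ultimately show ?thesis unfolding G_def by linarith
  qed
  have G_ge: "b * s \<le> G j s" if "j\<le>J" "0 \<le> s" for j s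
    using gp that unfolding G_def by auto
  have root: "\<exists>s. 0 \<le> s \<and> s \<le> r/b \<and> G j s = r" if "j\<le>J" "0 \<le> r" for j r
  proof -
    have "G j 0 \<le> r" using G0 that by simp
    moreover have "r \<le> G j (r/b)" using G_ge[of j "r/b"] that b by simp
    moreover have "0 \<le> r/b" using that b by simp
    moreover have "continuous_on {0..r/b} (G j)" using G_cont[OF that(1)] continuous_on_subset by blast
    ultimately show ?thesis using IVT'[of "G j" 0 r "r/b"] by blast
  qed
  define T where "T j r = (SOME s. 0 \<le> s \<and> s \<le> r/b \<and> G j s = r)" for j r
  have T: "0 \<le> T j r \<and> T j r \<le> r/b \<and> G j (T j r) = r" if "j\<le>J" "0 \<le> r" for j r
    unfolding T_def by (rule someI_ex) (rule root[OF that])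
  have T_mono: "T j r1 \<le> T j r2" if "j\<le>J" "0 \<le> r1" "r1 \<le> r2" for j r1 r2
  proof (rule ccontr)
    assume "\<not> ?thesis"
    then have lt: "T j r2 < T j r1" by simp
    have r2: "0 \<le> r2" using that by linarith
    have t1: "G j (T j r1) = r1" using T[OF that(1,2)] by blast
    have t2: "0 \<le> T j r2" "G j (T j r2) = r2" using T[OF that(1) r2] by blast+
    have "G j (T j r2) < G j (T j r1)" using G_strict[OF that(1) t2(1) lt] .
    then show False using t1 t2 that by linarith
  qed
  define rhs where "rhs v j = p j + c * (R1 J v j + L1 v j)" for v j
  have rhs_b: "0 \<le> rhs v j \<and> rhs v j \<le> p j + c * (2 * B)" if jJ: "j\<le>J" and vB: "\<forall>k\<le>J. 0 \<le> v k \<and> v k \<le> B" for v j B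
  proof -
    obtain k1 where k1: "k1 \<le> J" "\<forall>u. R1 J u j = u k1" using R1_cases[OF jJ] by blast
    obtain k2 where k2: "k2 \<le> J" "\<forall>u. L1 u j = u k2" using L1_cases[OF jJ] by blast
    have "R1 J v j = v k1" "L1 v j = v k2" using k1 k2 by auto
    moreover have "0 \<le> v k1" "v k1 \<le> B" "0 \<le> v k2" "v k2 \<le> B" using k1 k2 vB by auto
    ultimately have "0 \<le> R1 J v j + L1 v j" "R1 J v j + L1 v j \<le> 2 * B" by linarith+
    then have "0 \<le> c * (R1 J v j + L1 v j)" "c * (R1 J v j + L1 v j) \<le> c * (2 * B)"
      using c by (auto intro: mult_left_mono)
    then show ?thesis using p jJ unfolding rhs_def by auto
  qed
  have rhs_mono: "rhs v j \<le> rhs w j" if jJ: "j\<le>J" and vw: "\<forall>k\<le>J. v k \<le> w k" for v w j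
  proof -
    obtain k1 where k1: "k1 \<le> J" "\<forall>u. R1 J u j = u k1" using R1_cases[OF jJ] by blast
    obtain k2 where k2: "k2 \<le> J" "\<forall>u. L1 u j = u k2" using L1_cases[OF jJ] by blast
    have "R1 J v j = v k1" "L1 v j = v k2" "R1 J w j = w k1" "L1 w j = w k2" using k1 k2 by auto
    moreover have "v k1 \<le> w k1" "v k2 \<le> w k2" using k1 k2 vw by auto
    ultimately have "R1 J v j + L1 v j \<le> R1 J w j + L1 w j" by linarith
    then show ?thesis unfolding rhs_def using c by (auto intro: mult_left_mono)
  qed
  define U where "U = rec_nat (\<lambda>j::nat. 0::real) (\<lambda>_ v j. T j (rhs v j))"
  have U0: "U 0 = (\<lambda>j. 0)" and US: "\<And>n. U (Suc n) = (\<lambda>j. T j (rhs (U n) j))"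
    unfolding U_def by auto
  define B where "B = (\<Sum>j\<le>J. p j)/a"
  have B0: "B \<ge> 0" using p a unfolding B_def by (auto intro!: sum_nonneg divide_nonneg_pos)
  have pB: "p j \<le> a * B" if "j \<le> J" for j
  proof -
    have "p j \<le> (\<Sum>j\<le>J. p j)" using p that by (intro member_le_sum) auto
    then show ?thesis using a unfolding B_def by simp
  qed
  have step: "0 \<le> T j (rhs v j) \<and> T j (rhs v j) \<le> B" if "j\<le>J" "\<forall>k\<le>J. 0 \<le> v k \<and> v k \<le> B" for v j
  proof -
    have r: "0 \<le> rhs v j" "rhs v j \<le> b * B" using rhs_b[OF that] pB[OF that(1)] unfolding b_def
      by (auto simp: algebra_simps)
    have "T j (rhs v j) \<le> rhs v j / b" using T[OF that(1) r(1)] by blast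
    also have "\<dots> \<le> B" using r b by (simp add: divide_le_eq mult.commute)
    finally show ?thesis using T[OF that(1) r(1)] by blast
  qed
  have inv: "\<forall>j\<le>J. 0 \<le> U n j \<and> U n j \<le> B \<and> U n j \<le> U (Suc n) j" for n
  proof (induction n)
    case 0
    have "\<forall>k\<le>J. 0 \<le> U 0 k \<and> U 0 k \<le> B" using B0 U0 by simp
    then show ?case using step U0 US by simp
  next
    case (Suc n)
    have b1: "\<forall>k\<le>J. 0 \<le> U (Suc n) k \<and> U (Suc n) k \<le> B" using step Suc US by simp
    have "T j (rhs (U n) j) \<le> T j (rhs (U (Suc n)) j)" if "j\<le>J" for j
    proof (rule T_mono[OF that])
      show "0 \<le> rhs (U n) j" using rhs_b[of j "U n" B] that Suc by blast
      show "rhs (U n) j \<le> rhs (U (Suc n)) j" using rhs_mono that Suc by blast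
    qed
    then show ?case using b1 US by simp
  qed
  define V where "V j = (SUP n. U n j)" for j
  have conv: "(\<lambda>n. U n j) \<longlonglongrightarrow> V j" if "j \<le> J" for j
    unfolding V_def
  proof (rule LIMSEQ_incseq_SUP)
    show "bdd_above (range (\<lambda>n. U n j))" using inv that by (auto intro!: bdd_aboveI2[where M=B])
    show "incseq (\<lambda>n. U n j)" using inv that by (auto intro!: incseq_SucI)
  qed
  have V0: "0 \<le> V j" if "j \<le> J" for j
    using conv[OF that] inv that by (auto intro!: LIMSEQ_le_const)
  have "AEq J a c g p V"
    unfolding AEq_def
  proof (intro allI impI)
    fix j assume j: "j \<le> J"
    obtain k1 where k1: "k1 \<le> J" "\<forall>u. R1 J u j = u k1" using R1_cases[OF j] by blast
    obtain k2 where k2: "k2 \<le> J" "\<forall>u. L1 u j = u k2" using L1_cases[OF j] by blast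
    have e1: "(\<lambda>n. rhs (U n) j) = (\<lambda>n. p j + c * (U n k1 + U n k2))"
      unfolding rhs_def using k1 k2 by simp
    have e2: "rhs V j = p j + c * (V k1 + V k2)"
      unfolding rhs_def using k1 k2 by simp
    have "(\<lambda>n. rhs (U n) j) \<longlonglongrightarrow> rhs V j"
      unfolding e1 e2 by (intro tendsto_intros conv k1 k2)
    moreover have "(\<lambda>n. rhs (U n) j) = (\<lambda>n. G j (U (Suc n) j))"
    proof
      fix n
      have "0 \<le> rhs (U n) j" using rhs_b[of j "U n" B] inv j by blast
      then show "rhs (U n) j = G j (U (Suc n) j)" using T[OF j] US by simp
    qed
    moreover have "(\<lambda>n. G j (U (Suc n) j)) \<longlonglongrightarrow> G j (V j)"
      by (rule continuous_on_tendsto_compose[OF G_cont[OF j]])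
         (use LIMSEQ_Suc[OF conv[OF j]] in auto)
    ultimately have "G j (V j) = rhs V j" using LIMSEQ_unique by metis
    then show "a * V j - c * (R1 J V j - 2 * V j + L1 V j) + g j (V j) = p j"
      unfolding G_def rhs_def b_def by (simp add: algebra_simps)
  qed
  then show ?thesis by blast
qed

lemma alg_eq:
  fixes dt A Q s D h F :: real
  assumes "dt \<noteq> 0"
  shows "((A - Q)/dt - s/2 * D/h = F) \<longleftrightarrow> (1/dt * A - s/2/h * D + - F = Q/dt)"
proof -
  have "(A - Q)/dt = 1/dt * A - Q/dt" by (simp add: diff_divide_distrib)
  moreover have "s/2 * D/h = s/2/h * D" by simp
  ultimately show ?thesis by auto
qed

theorem proposition9:
  fixes T \<sigma> \<epsilon> :: real and I J :: nat
    and m0 :: "real \<Rightarrow> real" and f :: "real \<Rightarrow> real \<Rightarrow> real"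
    and \<phi> :: "nat \<Rightarrow> nat \<Rightarrow> real"
  assumes "T > 0" and "\<sigma> > 0" and "I > 0" and "J > 0"
    and "bounded (m0 ` {0..1})" and "\<forall>x\<in>{0..1}. m0 x \<ge> 0"
    and "continuous_on ({0..1} \<times> UNIV) (\<lambda>(x, y). f x y)"
    and "\<forall>x\<in>{0..1}. antimono (f x)"
    and "bounded ((\<lambda>(x, y). f x y) ` ({0..1} \<times> UNIV))"
    and "\<forall>x\<in>{0..1}. \<forall>y. f x y \<le> 0"
    and "\<epsilon> > 0"
    and "in_M_eps I J \<epsilon> \<phi>"
  shows "(\<exists>\<psi>. psi_scheme T \<sigma> I J f m0 \<phi> \<psi>
            \<and> (\<forall>\<psi>'. psi_scheme T \<sigma> I J f m0 \<phi> \<psi>' \<longrightarrow>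
                   (\<forall>i\<le>I. \<forall>j\<le>J. \<psi>' i j = \<psi> i j)))
         \<and> (\<forall>\<psi>. psi_scheme T \<sigma> I J f m0 \<phi> \<psi> \<longrightarrow> in_M_eps I J 0 \<psi>)"
proof -
  define dt where "dt = T / real I"
  define dx where "dx = 1 / real J"
  have dt: "dt > 0" using assms(1,3) unfolding dt_def by simp
  have dx: "dx > 0" using assms(4) unfolding dx_def by simp
  define a where "a = 1/dt"
  define c where "c = \<sigma>^2/2/dx^2"
  have a: "a > 0" using dt unfolding a_def by simp
  have c: "c \<ge> 0" unfolding c_def by simp
  define Step where "Step i q u \<longleftrightarrow> (\<forall>j\<le>J. (u j - q j)/dt - \<sigma>^2/2 * (R1 J u j - 2 * u j + L1 u j)/dx^2
        = 1/\<sigma>^2 * f (real j * dx) (\<phi> (i+1) j * u j) * u j)" for i q u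
  have scheme: "psi_scheme T \<sigma> I J f m0 \<phi> \<psi> \<longleftrightarrow> (\<forall>i<I. Step i (\<psi> i) (\<psi> (Suc i)))
       \<and> (\<forall>j\<le>J. \<psi> 0 j = m0 (real j * dx) / \<phi> 0 j)" for \<psi>
    unfolding psi_scheme_def Let_def Step_def R1_def L1_def right_nb_def left_nb_def dt_def dx_def
    by simp
  define g where "g i j s = - (1/\<sigma>^2 * f (real j * dx) (\<phi> (i+1) j * s) * s)" for i j s
  have conv: "Step i q u \<longleftrightarrow> AEq J a c (g i) (\<lambda>j. q j / dt) u" for i q u
    unfolding Step_def AEq_def g_def a_def c_def using alg_eq[of dt] dt by simp
  have xj: "real j * dx \<in> {0..1}" if "j \<le> J" for j
  proof -
    have e: "real j * dx = real j / real J" by (simp add: dx_def)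
    have "real j / real J \<le> 1" using that assms(4) by (simp add: divide_le_eq)
    then show ?thesis unfolding e by simp
  qed
  have phipos: "0 < \<phi> (Suc i) j" if "i < I" "j \<le> J" for i j
  proof -
    have "\<epsilon> \<le> \<phi> (Suc i) j" using assms(12) that unfolding in_M_eps_def by simp
    then show ?thesis using assms(11) by linarith
  qed
  have gc: "\<forall>j\<le>J. continuous_on UNIV (g i j)" if "i < I" for i
  proof (intro allI impI)
    fix j assume j: "j \<le> J"
    have "continuous_on UNIV (\<lambda>s. (\<lambda>(x, y). f x y) (real j * dx, \<phi> (i+1) j * s))"
      by (rule continuous_on_compose2[OF assms(7)]) (use xj[OF j] in \<open>auto intro!: continuous_intros\<close>)
    then have "continuous_on UNIV (\<lambda>s. f (real j * dx) (\<phi> (i+1) j * s))" by simp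
    then show "continuous_on UNIV (g i j)" unfolding g_def using assms(2) by (auto intro!: continuous_intros)
  qed
  have fle: "f (real j * dx) y \<le> 0" if "j \<le> J" for j y
    using assms(10) xj[OF that] by blast
  have gp: "\<forall>j\<le>J. \<forall>s\<ge>0. g i j s \<ge> 0" for i
  proof (intro allI impI)
    fix j s :: _ assume j: "j \<le> J" and s: "(0::real) \<le> s"
    have "1/\<sigma>^2 * f (real j * dx) (\<phi> (i+1) j * s) \<le> 0"
      by (rule mult_nonneg_nonpos) (auto simp: fle[OF j])
    then have "1/\<sigma>^2 * f (real j * dx) (\<phi> (i+1) j * s) * s \<le> 0" using s by (rule mult_nonpos_nonneg)
    then show "g i j s \<ge> 0" unfolding g_def by simp
  qed
  have gn: "\<forall>j\<le>J. \<forall>s\<le>0. g i j s \<le> 0" for i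
  proof (intro allI impI)
    fix j s :: _ assume j: "j \<le> J" and s: "s \<le> (0::real)"
    have "1/\<sigma>^2 * f (real j * dx) (\<phi> (i+1) j * s) \<le> 0"
      by (rule mult_nonneg_nonpos) (auto simp: fle[OF j])
    then have "1/\<sigma>^2 * f (real j * dx) (\<phi> (i+1) j * s) * s \<ge> 0" using s by (rule mult_nonpos_nonpos)
    then show "g i j s \<le> 0" unfolding g_def by simp
  qed
  have gm: "\<forall>j\<le>J. \<forall>s t. 0\<le>s \<longrightarrow> s\<le>t \<longrightarrow> g i j s \<le> g i j t" if i: "i < I" for i
  proof (intro allI impI)
    fix j s t :: _ assume j: "j \<le> J" and s: "(0::real) \<le> s" and st: "s \<le> t"
    define h where "h y = - (1/\<sigma>^2 * f (real j * dx) y)" for y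
    have h0: "0 \<le> h y" for y unfolding h_def
      using mult_nonneg_nonpos[of "1/\<sigma>^2" "f (real j * dx) y"] fle[OF j] by simp
    have "\<phi> (i+1) j * s \<le> \<phi> (i+1) j * t" using phipos[OF i j] st by simp
    then have "f (real j * dx) (\<phi> (i+1) j * t) \<le> f (real j * dx) (\<phi> (i+1) j * s)"
      using assms(8) xj[OF j] by (metis antimonoD)
    then have hh: "h (\<phi> (i+1) j * s) \<le> h (\<phi> (i+1) j * t)" unfolding h_def
      by (simp add: divide_right_mono)
    have "h (\<phi> (i+1) j * s) * s \<le> h (\<phi> (i+1) j * t) * t"
      by (rule mult_mono[OF hh st h0 s])
    then show "g i j s \<le> g i j t" unfolding g_def h_def by simp
  qed
  have key: "(\<exists>u. Step i q u) \<and> (\<forall>u. Step i q u \<longrightarrow> (\<forall>j\<le>J. 0 \<le> u j))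
      \<and> (\<forall>u v. Step i q u \<longrightarrow> Step i q v \<longrightarrow> (\<forall>j\<le>J. u j = v j))"
    if i: "i < I" and q: "\<forall>j\<le>J. 0 \<le> q j" for i q
  proof -
    have p: "\<forall>j\<le>J. 0 \<le> q j / dt" using q dt by simp
    show ?thesis unfolding conv
      using AEq_exists[OF a c p gc[OF i] gm[OF i] gp gn] AEq_nonneg[OF a c p gn]
        AEq_le[OF a c p gn gm[OF i]]
      by (meson order.antisym)
  qed
  have cong: "Step i q u = Step i q' u" if "\<forall>j\<le>J. q j = q' j" for i q q' u
    unfolding Step_def using that by auto
  have init: "0 \<le> m0 (real j * dx) / \<phi> 0 j" if "j \<le> J" for j
  proof -
    have "\<epsilon> \<le> \<phi> 0 j" using assms(12) that unfolding in_M_eps_def by simp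
    then have "0 < \<phi> 0 j" using assms(11) by linarith
    moreover have "0 \<le> m0 (real j * dx)" using assms(6) xj[OF that] by blast
    ultimately show ?thesis by simp
  qed
  define Psi where "Psi = rec_nat (\<lambda>j. m0 (real j * dx) / \<phi> 0 j) (\<lambda>i q. SOME u. Step i q u)"
  have P0: "Psi 0 = (\<lambda>j. m0 (real j * dx) / \<phi> 0 j)" unfolding Psi_def by simp
  have PS: "Psi (Suc i) = (SOME u. Step i (Psi i) u)" for i unfolding Psi_def by simp
  have Pnn: "\<forall>j\<le>J. 0 \<le> Psi i j" if "i \<le> I" for i
    using that
  proof (induction i)
    case 0
    then show ?case using init P0 by simp
  next
    case (Suc i)
    then have i: "i < I" by simp
    have K: "(\<exists>u. Step i (Psi i) u) \<and> (\<forall>u. Step i (Psi i) u \<longrightarrow> (\<forall>j\<le>J. 0 \<le> u j))"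
      using key[OF i] Suc by simp
    then have "Step i (Psi i) (Psi (Suc i))" unfolding PS by (metis someI_ex)
    then show ?case using K by blast
  qed
  have PStep: "Step i (Psi i) (Psi (Suc i))" if i: "i < I" for i
  proof -
    have "\<exists>u. Step i (Psi i) u" using key[OF i] Pnn i by simp
    then show ?thesis unfolding PS by (metis someI_ex)
  qed
  have part1: "psi_scheme T \<sigma> I J f m0 \<phi> Psi" unfolding scheme using PStep P0 by simp
  have part2: "\<forall>j\<le>J. \<psi>' i j = Psi i j" if sch: "psi_scheme T \<sigma> I J f m0 \<phi> \<psi>'" and iI: "i \<le> I" for \<psi>' i
    using iI
  proof (induction i)
    case 0
    then show ?case using sch P0 unfolding scheme by simp
  next
    case (Suc i)
    then have i: "i < I" by simp
    have "Step i (\<psi>' i) (\<psi>' (Suc i))" using sch i unfolding scheme by blast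
    then have "Step i (Psi i) (\<psi>' (Suc i))" using cong[of "\<psi>' i" "Psi i" i "\<psi>' (Suc i)"] Suc by simp
    then show ?case using key[OF i] Pnn[of i] i PStep[OF i] by auto
  qed
  have part3: "in_M_eps I J 0 \<psi>" if sch: "psi_scheme T \<sigma> I J f m0 \<phi> \<psi>" for \<psi>
  proof -
    have "\<forall>j\<le>J. 0 \<le> \<psi> i j" if "i \<le> I" for i
      using that
    proof (induction i)
      case 0
      then show ?case using sch init unfolding scheme by simp
    next
      case (Suc i)
      then have i: "i < I" by simp
      have "Step i (\<psi> i) (\<psi> (Suc i))" using sch i unfolding scheme by blast
      then show ?case using key[OF i] Suc by auto
    qed
    then show ?thesis unfolding in_M_eps_def by simp
  qed
  show ?thesis using part1 part2 part3 by blast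
qed

end
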